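(* Let $n,m\ge1$, $r>0$, let $\varphi_1,\dots,\varphi_n:\mathbb{R}\to[0,\infty)$ be nonnegative functions and $x_1,\dots,x_m\in\mathbb{R}$ such that for each $j$ there is $i$ with $\varphi_i(x_j)>0$. Define sequences as follows. Set $v^1_i=\sqrt{r/n}$ for $i=1,\dots,n$. For $k\ge1$, given $v^k\in[0,\infty)^n$, let $u^k\in[0,\infty)^n$ with $\sum_i(u^k_i)^2=r$ be a point at which $$\widehat l^{\,k}(u)=\prod_{j=1}^m\Big(\sum_{i=1}^n u_i v^k_i\varphi_i(x_j)\Big)$$ attains its maximum over the sphere $\{u\in\mathbb{R}^n:\sum_iu_i^2=r\}$; then let $\overline\theta^{k+1}>0$ be defined by $(\overline\theta^{k+1})^2\sum_{i=1}^n u^k_iv^k_i=r$ and set $v^{k+1}_i=\overline\theta^{k+1}\sqrt{u^k_iv^k_i}$, so that $\sum_i(v^{k+1}_i)^2=r$. Then $\lim_{k\to\infty}\overline\theta^k=1$.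
   Context: This is the outer iteration ("steps (i)–(iii)") for maximizing the likelihood $\prod_j\sum_i u_iv_i\varphi_i(x_j)$ subject to $\sum u_i^2=\sum v_i^2=r$, where step (ii) computes the maximizer $u^k$ with $v^k$ fixed. *)

theory Defs
  imports Complex_Main
begin

text \<open>Vectors in R^n are represented as functions nat => real, with only the
components i < n (i.e. indices 0..n-1) being relevant. The approximate likelihood
lhat(u) = prod_j sum_i u_i v_i phi_i(x_j).\<close>

definition lhat :: "nat \<Rightarrow> nat \<Rightarrow> (nat \<Rightarrow> real \<Rightarrow> real) \<Rightarrow> (nat \<Rightarrow> real)
    \<Rightarrow> (nat \<Rightarrow> real) \<Rightarrow> (nat \<Rightarrow> real) \<Rightarrow> real" where
  "lhat n m \<phi> x v u = (\<Prod>j<m. \<Sum>i<n. u i * v i * \<phi> i (x j))"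

end

theory Submission
  imports Defs
begin

theorem lemma6:
  fixes n m :: nat and r :: real
    and \<phi> :: "nat \<Rightarrow> real \<Rightarrow> real" and x :: "nat \<Rightarrow> real"
    and u v :: "nat \<Rightarrow> nat \<Rightarrow> real" and \<theta> :: "nat \<Rightarrow> real"
  assumes n: "n \<ge> 1" and m: "m \<ge> 1" and r: "r > 0"
    and phi_nonneg: "\<And>i t. i < n \<Longrightarrow> \<phi> i t \<ge> 0"
    and phi_pos: "\<And>j. j < m \<Longrightarrow> \<exists>i<n. \<phi> i (x j) > 0"
    and v1: "\<And>i. i < n \<Longrightarrow> v 1 i = sqrt (r / real n)"
    and u_nonneg: "\<And>k i. k \<ge> 1 \<Longrightarrow> i < n \<Longrightarrow> u k i \<ge> 0"
    and u_sphere: "\<And>k. k \<ge> 1 \<Longrightarrow> (\<Sum>i<n. (u k i)\<^sup>2) = r"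
    and u_max: "\<And>k w. k \<ge> 1 \<Longrightarrow> (\<Sum>i<n. (w i)\<^sup>2) = r \<Longrightarrow>
                   lhat n m \<phi> x (v k) w \<le> lhat n m \<phi> x (v k) (u k)"
    and theta_pos: "\<And>k. k \<ge> 1 \<Longrightarrow> \<theta> (k + 1) > 0"
    and theta_eq: "\<And>k. k \<ge> 1 \<Longrightarrow> (\<theta> (k + 1))\<^sup>2 * (\<Sum>i<n. u k i * v k i) = r"
    and v_next: "\<And>k i. k \<ge> 1 \<Longrightarrow> i < n \<Longrightarrow> v (k + 1) i = \<theta> (k + 1) * sqrt (u k i * v k i)"
  shows "\<theta> \<longlonglongrightarrow> 1"
proof -
  have vprop: "(\<forall>i<n. v k i \<ge> 0) \<and> (\<Sum>i<n. (v k i)\<^sup>2) = r" if k: "k \<ge> 1" for k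
    using k
  proof (induction k rule: nat_induct_at_least)
    case base
    have "(\<Sum>i<n. (v 1 i)\<^sup>2) = (\<Sum>i<n. r / real n)"
      using v1 r by (intro sum.cong) auto
    also have "\<dots> = r" using n by simp
    finally show ?case using v1 r by auto
  next
    case (Suc k)
    have sq: "(v (Suc k) i)\<^sup>2 = (\<theta> (k+1))\<^sup>2 * (u k i * v k i)" if "i < n" for i
      using v_next[OF Suc.hyps(1) that] u_nonneg[OF Suc.hyps(1) that] Suc.IH that
      by (simp add: power_mult_distrib)
    have "(\<Sum>i<n. (v (Suc k) i)\<^sup>2) = (\<Sum>i<n. (\<theta> (k+1))\<^sup>2 * (u k i * v k i))"
      using sq by (intro sum.cong) auto
    also have "\<dots> = r" using theta_eq[OF Suc.hyps(1)] by (simp add: sum_distrib_left)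
    moreover have "\<forall>i<n. v (Suc k) i \<ge> 0"
    proof (intro allI impI)
      fix i assume i: "i < n"
      have "u k i * v k i \<ge> 0" using u_nonneg[OF Suc.hyps(1) i] Suc.IH i by simp
      then show "v (Suc k) i \<ge> 0"
        using v_next[OF Suc.hyps(1) i] theta_pos[OF Suc.hyps(1)] by simp
    qed
    ultimately show ?case by simp
  qed
  have uv_le: "u k i * v k i \<le> r" "u k i * v k i \<ge> 0" if k: "k \<ge> 1" and i: "i < n" for k i
  proof -
    have "(u k i)\<^sup>2 \<le> (\<Sum>i<n. (u k i)\<^sup>2)"
      using i by (intro member_le_sum) auto
    moreover have "(v k i)\<^sup>2 \<le> (\<Sum>i<n. (v k i)\<^sup>2)"
      using i by (intro member_le_sum) auto
    moreover have "2 * (u k i * v k i) \<le> (u k i)\<^sup>2 + (v k i)\<^sup>2"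
      using sum_squares_bound[of "u k i" "v k i"] by (simp add: mult.assoc)
    ultimately show "u k i * v k i \<le> r" using u_sphere[OF k] vprop[OF k] by linarith
    show "u k i * v k i \<ge> 0" using u_nonneg[OF k i] vprop[OF k] i by simp
  qed
  have theta_ge1: "\<theta> (k+1) \<ge> 1" if k: "k \<ge> 1" for k
  proof -
    have le: "(\<Sum>i<n. u k i * v k i) \<le> r"
    proof -
      have "(\<Sum>i<n. 2 * (u k i * v k i)) \<le> (\<Sum>i<n. (u k i)\<^sup>2 + (v k i)\<^sup>2)"
        by (intro sum_mono) (use sum_squares_bound in \<open>simp add: mult.assoc\<close>)
      then show ?thesis using u_sphere[OF k] vprop[OF k]
        by (simp add: sum.distrib sum_distrib_left[symmetric])
    qed
    have pos: "(\<Sum>i<n. u k i * v k i) > 0"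
    proof (rule ccontr)
      assume "\<not> ?thesis"
      then have "(\<theta> (k + 1))\<^sup>2 * (\<Sum>i<n. u k i * v k i) \<le> 0"
        by (simp add: mult_nonneg_nonpos)
      then show False using theta_eq[OF k] r by simp
    qed
    have "(\<theta> (k + 1))\<^sup>2 \<ge> 1"
    proof (rule ccontr)
      assume "\<not> ?thesis"
      then have "(\<theta> (k + 1))\<^sup>2 * (\<Sum>i<n. u k i * v k i) < 1 * (\<Sum>i<n. u k i * v k i)"
        using pos by (intro mult_strict_right_mono) auto
      then have "(\<theta> (k + 1))\<^sup>2 * (\<Sum>i<n. u k i * v k i) < r" using le by simp
      then show False using theta_eq[OF k] by simp
    qed
    then show ?thesis using theta_pos[OF k]
      using power2_le_imp_le[of 1 "\<theta> (k+1)"] by simp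
  qed
  define a where "a k = lhat n m \<phi> x (v k) (u k)" for k
  have step: "a (k+1) \<ge> (\<theta> (k+1)) ^ (2*m) * a k" if k: "k \<ge> 1" for k
  proof -
    have "a (k+1) \<ge> lhat n m \<phi> x (v (k+1)) (v (k+1))"
      unfolding a_def using vprop[of "k+1"] by (intro u_max) auto
    moreover have "lhat n m \<phi> x (v (k+1)) (v (k+1)) = (\<theta> (k+1)) ^ (2*m) * a k"
    proof -
      have "lhat n m \<phi> x (v (k+1)) (v (k+1)) =
            (\<Prod>j<m. (\<theta> (k+1))\<^sup>2 * (\<Sum>i<n. u k i * v k i * \<phi> i (x j)))"
        unfolding lhat_def
      proof (intro prod.cong refl)
        fix j
        have "(\<Sum>i<n. v (k + 1) i * v (k + 1) i * \<phi> i (x j)) =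
              (\<Sum>i<n. (\<theta> (k+1))\<^sup>2 * (u k i * v k i * \<phi> i (x j)))"
        proof (intro sum.cong refl)
          fix i assume "i \<in> {..<n}"
          then have i: "i < n" by simp
          have "v (k + 1) i * v (k + 1) i = (\<theta> (k+1))\<^sup>2 * (u k i * v k i)"
            using v_next[OF k i] uv_le(2)[OF k i]
            by (simp add: power2_eq_square algebra_simps)
          then show "v (k + 1) i * v (k + 1) i * \<phi> i (x j) =
              (\<theta> (k+1))\<^sup>2 * (u k i * v k i * \<phi> i (x j))" by simp
        qed
        then show "(\<Sum>i<n. v (k + 1) i * v (k + 1) i * \<phi> i (x j)) =
            (\<theta> (k+1))\<^sup>2 * (\<Sum>i<n. u k i * v k i * \<phi> i (x j))"
          by (simp add: sum_distrib_left)
      qed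
      also have "\<dots> = ((\<theta> (k+1))\<^sup>2) ^ m * a k"
        unfolding a_def lhat_def by (simp add: prod.distrib)
      finally show ?thesis by (simp add: power_mult)
    qed
    ultimately show ?thesis by simp
  qed
  have a1: "a 1 > 0"
  proof -
    have "lhat n m \<phi> x (v 1) (v 1) > 0"
      unfolding lhat_def
    proof (intro prod_pos ballI)
      fix j assume "j \<in> {..<m}"
      then obtain i0 where i0: "i0 < n" "\<phi> i0 (x j) > 0" using phi_pos by auto
      show "(\<Sum>i<n. v 1 i * v 1 i * \<phi> i (x j)) > 0"
      proof (rule sum_pos2[of _ i0])
        show "v 1 i0 * v 1 i0 * \<phi> i0 (x j) > 0" using i0 v1 r n by simp
      qed (use i0 phi_nonneg v1 in auto)
    qed
    moreover have "a 1 \<ge> lhat n m \<phi> x (v 1) (v 1)"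
      unfolding a_def using vprop[of 1] by (intro u_max) auto
    ultimately show ?thesis by simp
  qed
  have amono: "a (k+1) \<ge> a k \<and> a k > 0" if k: "k \<ge> 1" for k
    using k
  proof (induction k rule: nat_induct_at_least)
    case base
    have "(\<theta> 2) ^ (2*m) \<ge> 1" using theta_ge1[of 1] by (intro one_le_power) (simp add: numeral_2_eq_2)
    then have "1 * a 1 \<le> (\<theta> 2) ^ (2*m) * a 1" using a1 by (intro mult_right_mono) auto
    then have h1: "(\<theta> 2) ^ (2*m) * a 1 \<ge> a 1" by simp
    have h2: "a 2 \<ge> (\<theta> 2) ^ (2*m) * a 1" using step[of 1] by (simp add: numeral_2_eq_2)
    have "a 2 \<ge> a 1" using h1 h2 by linarith
    then show ?case using a1 by (simp add: numeral_2_eq_2)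
  next
    case (Suc k)
    have "(\<theta> (Suc k+1)) ^ (2*m) \<ge> 1" using theta_ge1[of "Suc k"] by (intro one_le_power) simp
    moreover have "a (Suc k) > 0" using Suc.IH by simp
    ultimately have "1 * a (Suc k) \<le> (\<theta> (Suc k+1)) ^ (2*m) * a (Suc k)"
      by (intro mult_right_mono) auto
    then have "(\<theta> (Suc k+1)) ^ (2*m) * a (Suc k) \<ge> a (Suc k)" by simp
    moreover have "a (Suc k + 1) \<ge> (\<theta> (Suc k+1)) ^ (2*m) * a (Suc k)" using step[of "Suc k"] by simp
    ultimately show ?case using \<open>a (Suc k) > 0\<close> by linarith
  qed
  define B where "B = (\<Prod>j<m. \<Sum>i<n. r * \<phi> i (x j))"
  have aB: "a k \<le> B" if k: "k \<ge> 1" for k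
    unfolding a_def lhat_def B_def
  proof (intro prod_mono conjI)
    fix j assume "j \<in> {..<m}"
    show "0 \<le> (\<Sum>i<n. u k i * v k i * \<phi> i (x j))"
      using uv_le(2)[OF k] phi_nonneg by (intro sum_nonneg) auto
    show "(\<Sum>i<n. u k i * v k i * \<phi> i (x j)) \<le> (\<Sum>i<n. r * \<phi> i (x j))"
      using uv_le(1)[OF k] phi_nonneg by (intro sum_mono mult_right_mono) auto
  qed
  define b where "b k = a (k+1)" for k
  have binc: "incseq b" unfolding b_def
    by (rule incseq_SucI) (use amono in simp)
  have bB: "\<forall>i. b i \<le> B" unfolding b_def using aB by simp
  obtain L where L: "b \<longlonglongrightarrow> L" "\<forall>i. b i \<le> L"
    using incseq_convergent[OF binc bB] by blast
  have bpos: "b k > 0" for k using amono[of "k+1"] unfolding b_def by simp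
  have Lpos: "L > 0" using bpos[of 0] L(2) by (metis less_le_trans)
  have q: "(\<lambda>k. b (k+1) / b k) \<longlonglongrightarrow> L / L"
    using L(1) LIMSEQ_Suc[OF L(1)] Lpos by (intro tendsto_divide) auto
  have c_le: "1 \<le> (\<theta> (k+2)) ^ (2*m)" "(\<theta> (k+2)) ^ (2*m) \<le> b (k+1) / b k" for k
  proof -
    show "1 \<le> (\<theta> (k+2)) ^ (2*m)" using theta_ge1[of "k+1"] by (intro one_le_power) simp
    have "a (k+2) \<ge> (\<theta> (k+2)) ^ (2*m) * a (k+1)" using step[of "k+1"] by simp
    then show "(\<theta> (k+2)) ^ (2*m) \<le> b (k+1) / b k"
      using bpos[of k] unfolding b_def by (simp add: field_simps)
  qed
  have c_lim: "(\<lambda>k. (\<theta> (k+2)) ^ (2*m)) \<longlonglongrightarrow> 1"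
  proof (rule tendsto_sandwich[of "\<lambda>_. 1" _ _ "\<lambda>k. b (k+1) / b k"])
    show "\<forall>\<^sub>F k in sequentially. 1 \<le> (\<theta> (k+2)) ^ (2*m)" using c_le(1) by simp
    show "\<forall>\<^sub>F k in sequentially. (\<theta> (k+2)) ^ (2*m) \<le> b (k+1) / b k" using c_le(2) by simp
    show "(\<lambda>_. 1) \<longlonglongrightarrow> (1::real)" by simp
    show "(\<lambda>k. b (k+1) / b k) \<longlonglongrightarrow> 1" using q Lpos by simp
  qed
  have t_le: "1 \<le> \<theta> (k+2)" "\<theta> (k+2) \<le> (\<theta> (k+2)) ^ (2*m)" for k
  proof -
    show "1 \<le> \<theta> (k+2)" using theta_ge1[of "k+1"] by simp
    then show "\<theta> (k+2) \<le> (\<theta> (k+2)) ^ (2*m)" using m by (intro self_le_power) auto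
  qed
  have "(\<lambda>k. \<theta> (k+2)) \<longlonglongrightarrow> 1"
  proof (rule tendsto_sandwich[of "\<lambda>_. 1" _ _ "\<lambda>k. (\<theta> (k+2)) ^ (2*m)"])
    show "\<forall>\<^sub>F k in sequentially. 1 \<le> \<theta> (k+2)" using t_le(1) by simp
    show "\<forall>\<^sub>F k in sequentially. \<theta> (k+2) \<le> (\<theta> (k+2)) ^ (2*m)" using t_le(2) by simp
    show "(\<lambda>_. 1) \<longlonglongrightarrow> (1::real)" by simp
    show "(\<lambda>k. (\<theta> (k+2)) ^ (2*m)) \<longlonglongrightarrow> 1" using c_lim by simp
  qed
  then show ?thesis by (rule LIMSEQ_offset)
qed

end
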